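(* Let $R$ be a DT ring with $2\in U(R)$. Then $\Delta(R)$ is a two-sided ideal of $R$, and $\Delta(R)=J(R)$.
   Context: All rings are associative with identity; $J(R)$ is the Jacobson radical, $U(R)$ the group of units. $\Delta(R)=\{x\in R: x+u\in U(R)\text{ for all }u\in U(R)\}$. $\mathrm{Tr}(R)=\{x\in R: x^3=x\}$. A ring $R$ is a DT ring if every $r\in R$ can be written $r=e+d$ with $e\in\mathrm{Tr}(R)$ and $d\in\Delta(R)$. *)

theory Defs
  imports Main
begin

definition unit_group :: "'a::ring_1 set" where
  "unit_group = {u. \<exists>v. u * v = 1 \<and> v * u = 1}"

definition Delta :: "'a::ring_1 set" where
  "Delta = {x. \<forall>u\<in>unit_group. x + u \<in> unit_group}"

definition Tr :: "'a::ring_1 set" where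
  "Tr = {x. x ^ 3 = x}"

definition DT_ring :: "'a::ring_1 itself \<Rightarrow> bool" where
  "DT_ring _ \<longleftrightarrow> (\<forall>r::'a. \<exists>e d. r = e + d \<and> e \<in> Tr \<and> d \<in> Delta)"

definition left_ideal :: "'a::ring_1 set \<Rightarrow> bool" where
  "left_ideal I \<longleftrightarrow> 0 \<in> I \<and> (\<forall>x\<in>I. \<forall>y\<in>I. x + y \<in> I) \<and> (\<forall>x\<in>I. - x \<in> I)
     \<and> (\<forall>r. \<forall>x\<in>I. r * x \<in> I)"

definition two_sided_ideal :: "'a::ring_1 set \<Rightarrow> bool" where
  "two_sided_ideal I \<longleftrightarrow> left_ideal I \<and> (\<forall>r. \<forall>x\<in>I. x * r \<in> I)"

definition maximal_left_ideal :: "'a::ring_1 set \<Rightarrow> bool" where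
  "maximal_left_ideal M \<longleftrightarrow> left_ideal M \<and> M \<noteq> UNIV \<and>
     (\<forall>I. left_ideal I \<and> M \<subseteq> I \<and> I \<noteq> UNIV \<longrightarrow> I = M)"

definition jacobson :: "'a::ring_1 set" where
  "jacobson = \<Inter> {M. maximal_left_ideal M}"

end

theory Submission
  imports Defs
begin

lemma unit_I: "(u::'a::ring_1) * v = 1 \<Longrightarrow> v * u = 1 \<Longrightarrow> u \<in> unit_group"
  unfolding unit_group_def by blast

lemma unit_one: "(1::'a::ring_1) \<in> unit_group"
  by (rule unit_I[of 1 1]) simp_all

lemma unit_mult:
  assumes "(u::'a::ring_1) \<in> unit_group" "w \<in> unit_group" shows "u * w \<in> unit_group"
proof -
  obtain v where v: "u * v = 1" "v * u = 1" using assms(1) unfolding unit_group_def by blast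
  obtain z where z: "w * z = 1" "z * w = 1" using assms(2) unfolding unit_group_def by blast
  have 1: "(u*w)*(z*v) = u*((w*z)*v)" by (simp add: mult.assoc)
  have 2: "(z*v)*(u*w) = z*((v*u)*w)" by (simp add: mult.assoc)
  show ?thesis by (rule unit_I[of _ "z*v"]) (simp_all only: 1 2 v z mult_1_left)
qed

lemma unit_neg: "(u::'a::ring_1) \<in> unit_group \<Longrightarrow> - u \<in> unit_group"
proof -
  assume "u \<in> unit_group"
  then obtain v where v: "u * v = 1" "v * u = 1" unfolding unit_group_def by blast
  show ?thesis by (rule unit_I[of _ "- v"]) (simp_all add: v)
qed

lemma unit_inv: "(u::'a::ring_1) \<in> unit_group \<Longrightarrow> \<exists>v\<in>unit_group. u * v = 1 \<and> v * u = 1"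
  unfolding unit_group_def by blast

lemma Delta_add: "(x::'a::ring_1) \<in> Delta \<Longrightarrow> y \<in> Delta \<Longrightarrow> x + y \<in> Delta"
  unfolding Delta_def by (simp add: add.assoc)

lemma Delta_neg: "(x::'a::ring_1) \<in> Delta \<Longrightarrow> - x \<in> Delta"
  unfolding Delta_def
proof safe
  fix u :: 'a assume x: "\<forall>u\<in>unit_group. x + u \<in> unit_group" and u: "u \<in> unit_group"
  have "x + - u \<in> unit_group" using x unit_neg[OF u] by blast
  from unit_neg[OF this] show "- x + u \<in> unit_group" by simp
qed

lemma Delta_zero: "(0::'a::ring_1) \<in> Delta"
  unfolding Delta_def by simp

lemma Delta_unit_left:
  assumes "(u::'a::ring_1) \<in> unit_group" "x \<in> Delta" shows "u * x \<in> Delta"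
  unfolding Delta_def
proof safe
  fix w :: 'a assume w: "w \<in> unit_group"
  obtain v where v: "v \<in> unit_group" "u * v = 1" "v * u = 1" using unit_inv[OF assms(1)] by blast
  have "x + v * w \<in> unit_group" using assms(2) unit_mult[OF v(1) w] unfolding Delta_def by blast
  from unit_mult[OF assms(1) this] have "u * (x + v * w) \<in> unit_group" .
  moreover have "u * (x + v * w) = u * x + w"
    by (simp add: distrib_left v(2) mult.assoc[symmetric])
  ultimately show "u * x + w \<in> unit_group" by simp
qed

lemma Delta_unit_right:
  assumes "(u::'a::ring_1) \<in> unit_group" "x \<in> Delta" shows "x * u \<in> Delta"
  unfolding Delta_def
proof safe
  fix w :: 'a assume w: "w \<in> unit_group"
  obtain v where v: "v \<in> unit_group" "u * v = 1" "v * u = 1" using unit_inv[OF assms(1)] by blast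
  have "x + w * v \<in> unit_group" using assms(2) unit_mult[OF w v(1)] unfolding Delta_def by blast
  from unit_mult[OF this assms(1)] have "(x + w * v) * u \<in> unit_group" .
  moreover have "(x + w * v) * u = x * u + w"
    by (simp add: distrib_right v(3) mult.assoc)
  ultimately show "x * u + w \<in> unit_group" by simp
qed

lemma Delta_diff: "(x::'a::ring_1) \<in> Delta \<Longrightarrow> y \<in> Delta \<Longrightarrow> x - y \<in> Delta"
proof -
  assume "x \<in> Delta" "y \<in> Delta"
  then have "x + - y \<in> Delta" by (intro Delta_add Delta_neg)
  then show ?thesis by (simp only: diff_conv_add_uminus)
qed

lemma one_plus_Delta: "(d::'a::ring_1) \<in> Delta \<Longrightarrow> 1 + d \<in> unit_group"
  unfolding Delta_def using unit_one by (auto simp: add.commute)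

lemma tri_unit: "(e::'a::ring_1) ^ 3 = e \<Longrightarrow> e + (1 - e * e) \<in> unit_group"
proof -
  assume h: "e ^ 3 = e"
  have e3: "e * (e * e) = e" using h by (simp add: power3_eq_cube mult.assoc)
  have e3': "(e * e) * e = e" using e3 by (simp add: mult.assoc)
  have e4: "(e*e)*(e*e) = e * e" using e3 by (simp add: mult.assoc)
  have e4': "e * (e * (e * e)) = e * e" using e3 by simp
  have "(e + (1 - e * e)) * (e + (1 - e * e)) = 1"
    by (simp add: distrib_left distrib_right left_diff_distrib right_diff_distrib e3 e3' e4)
  then show ?thesis using unit_I by blast
qed

lemma idem_left:
  assumes two: "(2::'a::ring_1) \<in> unit_group" and f: "f * f = (f::'a)" and x: "x \<in> Delta"
  shows "f * x \<in> Delta"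
proof -
  obtain h where h: "h \<in> unit_group" "2 * h = 1" "h * 2 = (1::'a)" using unit_inv[OF two] by blast
  have "(f + f - 1) * (f + f - 1) = (1::'a)" using f by (simp add: distrib_left distrib_right left_diff_distrib right_diff_distrib)
  then have u: "f + f - 1 \<in> unit_group" using unit_I by blast
  have "x + (f + f - 1) * x \<in> Delta" by (rule Delta_add[OF x Delta_unit_left[OF u x]])
  from Delta_unit_left[OF h(1) this] have "h * (x + (f + f - 1) * x) \<in> Delta" .
  moreover have "h * (x + (f + f - 1) * x) = f * x"
  proof -
    have "x + (f + f - 1) * x = 2 * (f * x)" by (simp add: algebra_simps mult_2)
    then show ?thesis by (simp add: mult.assoc[symmetric] h(3))
  qed
  ultimately show ?thesis by simp
qed

lemma idem_right:
  assumes two: "(2::'a::ring_1) \<in> unit_group" and f: "f * f = (f::'a)" and x: "x \<in> Delta"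
  shows "x * f \<in> Delta"
proof -
  obtain h where h: "h \<in> unit_group" "2 * h = 1" "h * 2 = (1::'a)" using unit_inv[OF two] by blast
  have "(f + f - 1) * (f + f - 1) = (1::'a)" using f by (simp add: distrib_left distrib_right left_diff_distrib right_diff_distrib)
  then have u: "f + f - 1 \<in> unit_group" using unit_I by blast
  have "x + x * (f + f - 1) \<in> Delta" by (rule Delta_add[OF x Delta_unit_right[OF u x]])
  from Delta_unit_right[OF h(1) this] have "(x + x * (f + f - 1)) * h \<in> Delta" .
  moreover have "(x + x * (f + f - 1)) * h = x * f"
  proof -
    have "x + x * (f + f - 1) = (x * f) * 2" by (simp add: algebra_simps mult_2_right)
    then show ?thesis by (simp add: mult.assoc h(2))
  qed
  ultimately show ?thesis by simp
qed

lemma Delta_ideal: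
  assumes dt: "DT_ring TYPE('a::ring_1)" and two: "(2::'a) \<in> unit_group"
  shows "two_sided_ideal (Delta :: 'a set)"
proof -
  have L: "r * x \<in> Delta" and R: "x * r \<in> Delta" if x: "x \<in> Delta" for r x :: 'a
  proof -
    obtain e d where r: "r = e + d" and e: "e ^ 3 = e" and d: "d \<in> Delta"
      using dt unfolding DT_ring_def Tr_def by blast
    have e3: "e * (e * e) = e" using e by (simp add: power3_eq_cube mult.assoc)
    have f: "(e*e)*(e*e) = e * e" using e3 by (simp add: mult.assoc)
    have u: "e + (1 - e * e) \<in> unit_group" by (rule tri_unit[OF e])
    have ed: "e = (e + (1 - e*e)) - 1 + e*e" by simp
    have dd: "d = (1 + d) - 1" by simp
    have "r * x = (e + (1 - e*e)) * x - x + (e*e) * x + ((1 + d) * x - x)"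
      by (simp add: r algebra_simps)
    moreover have "(e + (1 - e*e)) * x - x + (e*e) * x + ((1 + d) * x - x) \<in> Delta"
      using Delta_add[OF Delta_add[OF Delta_diff[OF Delta_unit_left[OF u x] x] idem_left[OF two f x]]
          Delta_diff[OF Delta_unit_left[OF one_plus_Delta[OF d] x] x]] .
    ultimately show "r * x \<in> Delta" by simp
    have "x * r = x * (e + (1 - e*e)) - x + x * (e*e) + (x * (1 + d) - x)"
      by (simp add: r algebra_simps)
    moreover have "x * (e + (1 - e*e)) - x + x * (e*e) + (x * (1 + d) - x) \<in> Delta"
      using Delta_add[OF Delta_add[OF Delta_diff[OF Delta_unit_right[OF u x] x] idem_right[OF two f x]]
          Delta_diff[OF Delta_unit_right[OF one_plus_Delta[OF d] x] x]] .
    ultimately show "x * r \<in> Delta" by simp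
  qed
  have "left_ideal (Delta :: 'a set)" unfolding left_ideal_def
  proof (intro conjI ballI allI)
    show "0 \<in> (Delta :: 'a set)" by (rule Delta_zero)
  next
    fix x y :: 'a assume "x \<in> Delta" "y \<in> Delta" then show "x + y \<in> Delta" by (rule Delta_add)
  next
    fix x :: 'a assume "x \<in> Delta" then show "- x \<in> Delta" by (rule Delta_neg)
  next
    fix r x :: 'a assume "x \<in> Delta" then show "r * x \<in> Delta" by (rule L)
  qed
  moreover have "\<forall>r. \<forall>x\<in>(Delta :: 'a set). x * r \<in> Delta" using R by blast
  ultimately show ?thesis unfolding two_sided_ideal_def by blast
qed

lemma left_ideal_unit:
  assumes "left_ideal (I::'a::ring_1 set)" "u \<in> I" "u \<in> unit_group" shows "I = UNIV"
proof -
  obtain v where "v * u = 1" using assms(3) unfolding unit_group_def by blast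
  moreover have "v * u \<in> I" using assms(1,2) unfolding left_ideal_def by blast
  ultimately have "1 \<in> I" by simp
  then have "\<forall>r. r * 1 \<in> I" using assms(1) unfolding left_ideal_def by blast
  then show ?thesis by auto
qed

lemma maximal_exists:
  assumes I: "left_ideal (I::'a::ring_1 set)" "I \<noteq> UNIV"
  shows "\<exists>M. maximal_left_ideal M \<and> I \<subseteq> M"
proof -
  let ?A = "{J. left_ideal J \<and> J \<noteq> UNIV \<and> I \<subseteq> J}"
  have one: "(1::'a) \<notin> J" if "left_ideal J" "J \<noteq> UNIV" for J
    using left_ideal_unit[OF that(1) _ unit_one] that(2) by blast
  have "\<exists>M\<in>?A. \<forall>X\<in>?A. M \<subseteq> X \<longrightarrow> X = M"
  proof (rule subset_Zorn_nonempty)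
    show "?A \<noteq> {}" using I by blast
  next
    fix C assume C: "C \<noteq> {}" "subset.chain ?A C"
    have sub: "C \<subseteq> ?A" and ch: "\<forall>X\<in>C. \<forall>Y\<in>C. X \<subseteq> Y \<or> Y \<subseteq> X"
      using C(2) unfolding subset.chain_def by auto
    have li: "left_ideal (\<Union>C)" unfolding left_ideal_def
    proof (intro conjI ballI allI)
      obtain J where "J \<in> C" using C(1) by blast
      then show "0 \<in> \<Union>C" using sub unfolding left_ideal_def by blast
    next
      fix x y assume "x \<in> \<Union>C" "y \<in> \<Union>C"
      then obtain X Y where X: "X \<in> C" "x \<in> X" and Y: "Y \<in> C" "y \<in> Y" by blast
      show "x + y \<in> \<Union>C"
      proof (cases "X \<subseteq> Y")
        case True
        then have "x + y \<in> Y" using X Y sub unfolding left_ideal_def by blast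
        then show ?thesis using Y by blast
      next
        case False
        then have "Y \<subseteq> X" using ch X Y by blast
        then have "x + y \<in> X" using X Y sub unfolding left_ideal_def by blast
        then show ?thesis using X by blast
      qed
    next
      fix x assume "x \<in> \<Union>C"
      then obtain X where X: "X \<in> C" "x \<in> X" by blast
      then show "- x \<in> \<Union>C" using sub unfolding left_ideal_def by blast
    next
      fix r x assume "x \<in> \<Union>C"
      then obtain X where X: "X \<in> C" "x \<in> X" by blast
      then show "r * x \<in> \<Union>C" using sub unfolding left_ideal_def by blast
    qed
    have "(1::'a) \<notin> \<Union>C" using sub one by blast
    then have "\<Union>C \<noteq> UNIV" by blast
    moreover have "I \<subseteq> \<Union>C" using C(1) sub by blast
    ultimately show "\<Union>C \<in> ?A" using li by blast
  qed
  then obtain M where M: "M \<in> ?A" "\<forall>X\<in>?A. M \<subseteq> X \<longrightarrow> X = M" by blast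
  have "maximal_left_ideal M" unfolding maximal_left_ideal_def
  proof (intro conjI allI impI)
    show "left_ideal M" "M \<noteq> UNIV" using M(1) by auto
  next
    fix J assume J: "left_ideal J \<and> M \<subseteq> J \<and> J \<noteq> UNIV"
    then have "J \<in> ?A" using M(1) by auto
    then show "J = M" using M(2) J by blast
  qed
  then show ?thesis using M by blast
qed

lemma jacobson_left_ideal_mult:
  "(x::'a::ring_1) \<in> jacobson \<Longrightarrow> r * x \<in> jacobson"
  unfolding jacobson_def
proof
  fix M :: "'a set" assume x: "x \<in> \<Inter> {M. maximal_left_ideal M}" and M: "M \<in> {M. maximal_left_ideal M}"
  then have "x \<in> M" by blast
  moreover have "left_ideal M" using M unfolding maximal_left_ideal_def by simp
  ultimately show "r * x \<in> M" unfolding left_ideal_def by blast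
qed

lemma jacobson_left_inv:
  assumes "(y::'a::ring_1) \<in> jacobson" shows "\<exists>a. a * (1 + y) = 1"
proof (rule ccontr)
  assume na: "\<not> (\<exists>a. a * (1 + y) = 1)"
  let ?I = "{r * (1 + y) | r. True}"
  have li: "left_ideal ?I" unfolding left_ideal_def
  proof (intro conjI ballI allI)
    have "0 * (1 + y) \<in> ?I" by blast
    then show "0 \<in> ?I" by simp
  next
    fix a b assume "a \<in> ?I" "b \<in> ?I"
    then obtain r s where "a = r * (1+y)" "b = s * (1+y)" by blast
    then have "a + b = (r + s) * (1 + y)" by (simp add: distrib_right)
    then show "a + b \<in> ?I" by blast
  next
    fix a assume "a \<in> ?I"
    then obtain r where "a = r * (1+y)" by blast
    then have "- a = (- r) * (1 + y)" by simp
    then show "- a \<in> ?I" by blast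
  next
    fix s a assume "a \<in> ?I"
    then obtain r where "a = r * (1+y)" by blast
    then have "s * a = (s * r) * (1 + y)" by (simp add: mult.assoc)
    then show "s * a \<in> ?I" by blast
  qed
  have "1 \<notin> ?I" using na by auto
  then have "?I \<noteq> UNIV" by blast
  then obtain M where M: "maximal_left_ideal M" "?I \<subseteq> M" using maximal_exists[OF li] by blast
  have "1 * (1 + y) \<in> ?I" by blast
  then have "1 + y \<in> M" using M by auto
  moreover have "y \<in> M" using assms M(1) unfolding jacobson_def by blast
  moreover have liM: "left_ideal M" and nM: "M \<noteq> UNIV" using M(1) unfolding maximal_left_ideal_def by simp_all
  ultimately have "(1 + y) + - y \<in> M" unfolding left_ideal_def by blast
  then have "1 \<in> M" by simp
  then have "M = UNIV" using left_ideal_unit[OF liM _ unit_one] by blast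
  then show False using nM by blast
qed

lemma jacobson_unit:
  assumes "(y::'a::ring_1) \<in> jacobson" shows "1 + y \<in> unit_group"
proof -
  obtain a where a: "a * (1 + y) = 1" using jacobson_left_inv[OF assms] by blast
  have aeq: "1 + (- (a * y)) = a" using a by (simp add: algebra_simps)
  have ay: "- (a * y) \<in> jacobson" using jacobson_left_ideal_mult[OF assms, of "- a"] by simp
  obtain b where "b * (1 + - (a * y)) = 1" using jacobson_left_inv[OF ay] by blast
  then have b: "b * a = 1" using aeq by simp
  have "b = b * (a * (1 + y))" using a by simp
  also have "\<dots> = 1 + y" using b by (simp add: mult.assoc[symmetric])
  finally have "(1 + y) * a = 1" using b by simp
  then show ?thesis using a by (rule unit_I)
qed

lemma jacobson_sub_Delta: "(jacobson :: 'a::ring_1 set) \<subseteq> Delta"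
proof
  fix x :: 'a assume x: "x \<in> jacobson"
  show "x \<in> Delta" unfolding Delta_def
  proof safe
    fix u :: 'a assume u: "u \<in> unit_group"
    obtain v where v: "v \<in> unit_group" "u * v = 1" "v * u = 1" using unit_inv[OF u] by blast
    have "1 + v * x \<in> unit_group" by (rule jacobson_unit[OF jacobson_left_ideal_mult[OF x]])
    from unit_mult[OF u this] have "u * (1 + v * x) \<in> unit_group" .
    moreover have "u * (1 + v * x) = x + u"
      by (simp add: distrib_left mult.assoc[symmetric] v(2) add.commute)
    ultimately show "x + u \<in> unit_group" by simp
  qed
qed

lemma Delta_sub_jacobson:
  assumes id: "two_sided_ideal (Delta :: 'a::ring_1 set)"
  shows "(Delta :: 'a set) \<subseteq> jacobson"
proof
  fix x :: 'a assume x: "x \<in> Delta"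
  show "x \<in> jacobson" unfolding jacobson_def
  proof
    fix M :: "'a set" assume "M \<in> {M. maximal_left_ideal M}"
    then have M: "maximal_left_ideal M" by simp
    have liM: "left_ideal M" and nM: "M \<noteq> UNIV"
      and mx: "\<And>I. left_ideal I \<Longrightarrow> M \<subseteq> I \<Longrightarrow> I \<noteq> UNIV \<Longrightarrow> I = M"
      using M unfolding maximal_left_ideal_def by blast+
    show "x \<in> M"
    proof (rule ccontr)
      assume xM: "x \<notin> M"
      let ?I = "{m + r * x | m r. m \<in> M}"
      have li: "left_ideal ?I" unfolding left_ideal_def
      proof (intro conjI ballI allI)
        have "0 + 0 * x \<in> ?I" using liM unfolding left_ideal_def by blast
        then show "0 \<in> ?I" by simp
      next
        fix a b assume "a \<in> ?I" "b \<in> ?I"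
        then obtain m r n s where "a = m + r * x" "b = n + s * x" "m \<in> M" "n \<in> M" by blast
        moreover have "m + n \<in> M" using calculation liM unfolding left_ideal_def by blast
        moreover have "a + b = (m + n) + (r + s) * x" using calculation by (simp add: algebra_simps)
        ultimately show "a + b \<in> ?I" by blast
      next
        fix a assume "a \<in> ?I"
        then obtain m r where "a = m + r * x" "m \<in> M" by blast
        moreover have "- m \<in> M" using calculation liM unfolding left_ideal_def by blast
        moreover have "- a = (- m) + (- r) * x" using calculation by simp
        ultimately show "- a \<in> ?I" by blast
      next
        fix s a assume "a \<in> ?I"
        then obtain m r where "a = m + r * x" "m \<in> M" by blast
        moreover have "s * m \<in> M" using calculation liM unfolding left_ideal_def by blast
        moreover have "s * a = (s * m) + (s * r) * x" using calculation by (simp add: algebra_simps)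
        ultimately show "s * a \<in> ?I" by blast
      qed
      have sub: "M \<subseteq> ?I"
      proof
        fix m assume "m \<in> M"
        then have "m + 0 * x \<in> ?I" by blast
        then show "m \<in> ?I" by simp
      qed
      have "x \<in> ?I"
      proof -
        have "0 + 1 * x \<in> ?I" using liM unfolding left_ideal_def by blast
        then show ?thesis by simp
      qed
      then have "?I \<noteq> M" using xM by blast
      then have "?I = UNIV" using mx[OF li sub] by blast
      then have "(1::'a) \<in> ?I" by simp
      then obtain m r where mr: "1 = m + r * x" "m \<in> M" by blast
      have "r * x \<in> Delta" using id x unfolding two_sided_ideal_def left_ideal_def by blast
      then have "- (r * x) \<in> Delta" by (rule Delta_neg)
      then have "1 + - (r * x) \<in> unit_group" by (rule one_plus_Delta)
      moreover have "m = 1 + - (r * x)" using mr by (simp add: algebra_simps)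
      ultimately have "m \<in> unit_group" by simp
      then have "M = UNIV" by (rule left_ideal_unit[OF liM mr(2)])
      then show False using nM by simp
    qed
  qed
qed

theorem proposition4p3:
  assumes "DT_ring TYPE('a::ring_1)"
    and "(2::'a) \<in> unit_group"
  shows "two_sided_ideal (Delta :: 'a set) \<and> (Delta :: 'a set) = jacobson"
proof -
  have id: "two_sided_ideal (Delta :: 'a set)" by (rule Delta_ideal[OF assms])
  show ?thesis using id Delta_sub_jacobson[OF id] jacobson_sub_Delta by blast
qed

end
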